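(* Let $F$ be a near-idempotent tract, let $J\subseteq\Delta^r_n$ and $J'\subseteq\Delta^{r'}_{n'}$ be M-convex sets, and let $\iota\colon J\to J'$ be a polymatroid embedding. For an $F$-representation $\rho$ of $J'$, define $\iota^*\rho\colon\Delta^r_n\to F$ by $\iota^*\rho(\alpha)=\rho(\iota(\alpha))$ for $\alpha\in J$ and $\iota^*\rho(\alpha)=0$ otherwise. Then $\iota^*\rho$ is an $F$-representation of $J$, and $[\rho]\mapsto[\iota^*\rho]$ is a well-defined map $\iota^*\colon\mathrm{Gr}_{J'}(F)\to\mathrm{Gr}_J(F)$. If $\iota$ is bijective, then $\iota^*$ is bijective.
   Context: Tract: commutative monoid with absorbing $0$, $F^\times=F\setminus\{0\}$ a group, null set $N_F$ an ideal of $\mathbb N[F^\times]$ with unique additive inverses. $F$ is near-idempotent if $1+1\in N_F$ (so $-1=1$) and $1+1+x\in N_F$ for some $x\in F^\times$. M-convex $J\subseteq\Delta^r_n$: nonempty, and for $\alpha,\beta\in J$ and $i$ with $\alpha_i<\beta_i$ there is $j$ with $\alpha_j>\beta_j$ and $\alpha+\epsilon_i-\epsilon_j,\beta-\epsilon_i+\epsilon_j\in J$; $\delta^\mp_J$ = componentwise min/max. For near-idempotent $F$, an $F$-representation of $J$ is $\rho\colon\Delta^r_n\to F$ with support exactly $J$ such that $\sum_{k=0}^s\rho(\alpha-\epsilon_{i_k}+\epsilon_{i_0}+\dots+\epsilon_{i_s})\rho(\alpha+\epsilon_{i_k}+\epsilon_{j_2}+\dots+\epsilon_{j_s})\in N_F$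 for all $2\le s\le r$, $\alpha\in\Delta^{r-s}_n$ with $\delta^-_J\le\alpha$, and $i_0,\dots,i_s,j_2,\dots,j_s\in[n]$ with $\alpha+\epsilon_{i_0}+\dots+\epsilon_{i_s}+\epsilon_{j_2}+\dots+\epsilon_{j_s}\le\delta^+_J$. $\mathrm{Gr}_J(F)$ is the set of $F$-representations modulo $\rho\sim a\rho$ ($a\in F^\times$). Deletion and contraction: for $\nu\in\mathbb N^n$ with $\nu\le\delta^+_J-\alpha$ for some $\alpha\in J$, $J\setminus\nu=\{\alpha\in J:\alpha\le\delta^+_J-\nu\}$; for $\mu\in\mathbb N^n$ with $\mu\le\alpha-\delta^-_J$ for some $\alpha\in J$, $J/\mu=\{\alpha-\mu:\alpha\in J,\ \delta^-_J+\mu\le\alpha\}$. An embedded minor is $J\setminus\nu/\mu+\tau=((J\setminus\nu)/\mu)+\tau$ where $\mu+\delta^-_{J\setminus\nu}\le\alpha\le\delta^+_J-\nu$ for some $\alpha\in J$ and $\tau\in\mathbb Z^n$ with $\tau\ge-\delta^-_{(J\setminus\nu)/\mu}$; its minor embedding is $J\setminus\nu/\mu+\tau\to J$, $\alpha\mapsto\alpha+\mu-\tau$. For $\sigma\in S_n$, $\iota_\sigma\colon J\to\sigma(J)$ permutes coordinates; $\iota_n\colon J\to\iota_n(J)\subseteq\Delta^r_{n+1}$ appends a zero coordinate (extension of variables), and its inverse $\iota_n(J)\to J$ is a restriction of variables. These four kinds of maps are elementary polymatroid embeddings; a polymatroid embedding is a composition of elementary ones (all these sets are M-convex). *)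

theory Defs
  imports Main "HOL-Library.Multiset" "HOL-Combinatorics.Permutations"
begin

text \<open>Elements of N^n are functions nat => nat vanishing at every coordinate l >= n.
  Coordinates are 0,...,n-1 (this is [n]).  In this encoding the extension of variables
  iota_n : Delta^r_n -> Delta^r_(n+1) (appending a zero coordinate) is the identity function.\<close>

type_synonym vec = "nat \<Rightarrow> nat"

definition unitv :: "nat \<Rightarrow> vec" where
  "unitv i = (\<lambda>l. if l = i then 1 else 0)"

definition Delta :: "nat \<Rightarrow> nat \<Rightarrow> vec set" where
  "Delta n r = {\<alpha>. (\<forall>l\<ge>n. \<alpha> l = 0) \<and> (\<Sum>l<n. \<alpha> l) = r}"

definition M_convex :: "nat \<Rightarrow> nat \<Rightarrow> vec set \<Rightarrow> bool" where
  "M_convex n r J \<longleftrightarrow> J \<noteq> {} \<and> J \<subseteq> Delta n r \<and>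
     (\<forall>\<alpha>\<in>J. \<forall>\<beta>\<in>J. \<forall>i<n. \<alpha> i < \<beta> i \<longrightarrow>
        (\<exists>j<n. \<alpha> j > \<beta> j \<and>
           (\<lambda>l. \<alpha> l + unitv i l - unitv j l) \<in> J \<and>
           (\<lambda>l. \<beta> l - unitv i l + unitv j l) \<in> J))"

definition dmin :: "vec set \<Rightarrow> vec" where
  "dmin J = (\<lambda>l. Min ((\<lambda>\<alpha>. \<alpha> l) ` J))"

definition dmax :: "vec set \<Rightarrow> vec" where
  "dmax J = (\<lambda>l. Max ((\<lambda>\<alpha>. \<alpha> l) ` J))"

text \<open>The semiring N[F^x] is modelled by multisets over F with no occurrence of 0.
  Product in N[F^x]:\<close>
definition mult_ms :: "'a::comm_monoid_mult multiset \<Rightarrow> 'a multiset \<Rightarrow> 'a multiset" where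
  "mult_ms M K = sum_mset (image_mset (\<lambda>x. image_mset (\<lambda>y. x * y) K) M)"

text \<open>F is the type 'a (commutative monoid with absorbing 0), N is the null set.\<close>
definition tract :: "'a::{comm_monoid_mult, mult_zero} multiset set \<Rightarrow> bool" where
  "tract N \<longleftrightarrow>
     (0::'a) \<noteq> 1 \<and>
     (\<forall>x y::'a. x \<noteq> 0 \<longrightarrow> y \<noteq> 0 \<longrightarrow> x * y \<noteq> 0) \<and>
     (\<forall>x::'a. x \<noteq> 0 \<longrightarrow> (\<exists>y. x * y = 1)) \<and>
     (\<forall>M\<in>N. 0 \<notin># M) \<and>
     {#} \<in> N \<and>
     (\<forall>M\<in>N. \<forall>K\<in>N. M + K \<in> N) \<and>
     (\<forall>M\<in>N. \<forall>K. 0 \<notin># K \<longrightarrow> mult_ms K M \<in> N) \<and>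
     (\<forall>a::'a. a \<noteq> 0 \<longrightarrow> (\<exists>!b. b \<noteq> 0 \<and> {#a, b#} \<in> N))"

definition near_idempotent :: "'a::{comm_monoid_mult, mult_zero} multiset set \<Rightarrow> bool" where
  "near_idempotent N \<longleftrightarrow> {#1, 1#} \<in> N \<and> (\<exists>x::'a. x \<noteq> 0 \<and> {#1, 1, x#} \<in> N)"

definition fsum :: "nat set \<Rightarrow> (nat \<Rightarrow> 'a::zero) \<Rightarrow> 'a multiset" where
  "fsum K f = filter_mset (\<lambda>x. x \<noteq> 0) (image_mset f (mset_set K))"

definition is_rep :: "'a::{comm_monoid_mult, mult_zero} multiset set \<Rightarrow> nat \<Rightarrow> nat \<Rightarrow> vec set
    \<Rightarrow> (vec \<Rightarrow> 'a) \<Rightarrow> bool" where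
  "is_rep N n r J \<rho> \<longleftrightarrow>
     {\<alpha>. \<rho> \<alpha> \<noteq> 0} = J \<and>
     (\<forall>s \<alpha> (i::nat \<Rightarrow> nat) (j::nat \<Rightarrow> nat).
        2 \<le> s \<longrightarrow> s \<le> r \<longrightarrow> \<alpha> \<in> Delta n (r - s) \<longrightarrow> dmin J \<le> \<alpha> \<longrightarrow>
        (\<forall>k\<in>{0..s}. i k < n) \<longrightarrow> (\<forall>k\<in>{2..s}. j k < n) \<longrightarrow>
        (\<lambda>l. \<alpha> l + (\<Sum>m=0..s. unitv (i m) l) + (\<Sum>m=2..s. unitv (j m) l)) \<le> dmax J \<longrightarrow>
        fsum {0..s} (\<lambda>k.
            \<rho> (\<lambda>l. \<alpha> l + (\<Sum>m=0..s. unitv (i m) l) - unitv (i k) l) *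
            \<rho> (\<lambda>l. \<alpha> l + unitv (i k) l + (\<Sum>m=2..s. unitv (j m) l))) \<in> N)"

definition reps :: "'a::{comm_monoid_mult, mult_zero} multiset set \<Rightarrow> nat \<Rightarrow> nat \<Rightarrow> vec set
    \<Rightarrow> (vec \<Rightarrow> 'a) set" where
  "reps N n r J = {\<rho>. is_rep N n r J \<rho>}"

definition rep_rel :: "'a::{comm_monoid_mult, mult_zero} multiset set \<Rightarrow> nat \<Rightarrow> nat \<Rightarrow> vec set
    \<Rightarrow> ((vec \<Rightarrow> 'a) \<times> (vec \<Rightarrow> 'a)) set" where
  "rep_rel N n r J = {(\<rho>, \<sigma>). \<rho> \<in> reps N n r J \<and> \<sigma> \<in> reps N n r J \<and>
                         (\<exists>a. a \<noteq> 0 \<and> \<sigma> = (\<lambda>\<beta>. a * \<rho> \<beta>))}"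

definition Gr :: "'a::{comm_monoid_mult, mult_zero} multiset set \<Rightarrow> nat \<Rightarrow> nat \<Rightarrow> vec set
    \<Rightarrow> (vec \<Rightarrow> 'a) set set" where
  "Gr N n r J = reps N n r J // rep_rel N n r J"

definition rep_class :: "'a::{comm_monoid_mult, mult_zero} multiset set \<Rightarrow> nat \<Rightarrow> nat \<Rightarrow> vec set
    \<Rightarrow> (vec \<Rightarrow> 'a) \<Rightarrow> (vec \<Rightarrow> 'a) set" where
  "rep_class N n r J \<rho> = rep_rel N n r J `` {\<rho>}"

definition deletion :: "vec set \<Rightarrow> vec \<Rightarrow> vec set" where
  "deletion J \<nu> = {\<alpha>\<in>J. \<alpha> \<le> (\<lambda>l. dmax J l - \<nu> l)}"

definition contraction :: "vec set \<Rightarrow> vec \<Rightarrow> vec set" where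
  "contraction J \<mu> = {(\<lambda>l. \<alpha> l - \<mu> l) | \<alpha>. \<alpha> \<in> J \<and> (\<lambda>l. dmin J l + \<mu> l) \<le> \<alpha>}"

definition translate :: "vec set \<Rightarrow> (nat \<Rightarrow> int) \<Rightarrow> vec set" where
  "translate K \<tau> = (\<lambda>\<beta> l. nat (int (\<beta> l) + \<tau> l)) ` K"

definition emb_minor :: "vec set \<Rightarrow> vec \<Rightarrow> vec \<Rightarrow> (nat \<Rightarrow> int) \<Rightarrow> vec set" where
  "emb_minor J \<nu> \<mu> \<tau> = translate (contraction (deletion J \<nu>) \<mu>) \<tau>"

inductive elem_emb :: "nat \<Rightarrow> nat \<Rightarrow> vec set \<Rightarrow> nat \<Rightarrow> nat \<Rightarrow> vec set \<Rightarrow> (vec \<Rightarrow> vec) \<Rightarrow> bool" where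
  minor:
    "\<lbrakk> M_convex n r' J'; M_convex n r (emb_minor J' \<nu> \<mu> \<tau>);
       \<forall>l\<ge>n. \<nu> l = 0; \<forall>l\<ge>n. \<mu> l = 0; \<forall>l\<ge>n. \<tau> l = 0;
       \<exists>\<alpha>\<in>J'. \<nu> \<le> (\<lambda>l. dmax J' l - \<alpha> l);
       \<exists>\<alpha>\<in>J'. (\<lambda>l. \<mu> l + dmin (deletion J' \<nu>) l) \<le> \<alpha> \<and> \<alpha> \<le> (\<lambda>l. dmax J' l - \<nu> l);
       \<forall>l. - int (dmin (contraction (deletion J' \<nu>) \<mu>) l) \<le> \<tau> l \<rbrakk>
     \<Longrightarrow> elem_emb n r (emb_minor J' \<nu> \<mu> \<tau>) n r' J' (\<lambda>\<alpha> l. nat (int (\<alpha> l) + int (\<mu> l) - \<tau> l))"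
| perm:
    "\<lbrakk> \<sigma> permutes {..<n}; M_convex n r J; M_convex n r ((\<lambda>\<alpha>. \<alpha> \<circ> inv \<sigma>) ` J) \<rbrakk>
     \<Longrightarrow> elem_emb n r J n r ((\<lambda>\<alpha>. \<alpha> \<circ> inv \<sigma>) ` J) (\<lambda>\<alpha>. \<alpha> \<circ> inv \<sigma>)"
| extension:
    "\<lbrakk> M_convex n r J; M_convex (Suc n) r J \<rbrakk> \<Longrightarrow> elem_emb n r J (Suc n) r J id"
| restriction:
    "\<lbrakk> M_convex n r J; M_convex (Suc n) r J \<rbrakk> \<Longrightarrow> elem_emb (Suc n) r J n r J id"

inductive poly_emb :: "nat \<Rightarrow> nat \<Rightarrow> vec set \<Rightarrow> nat \<Rightarrow> nat \<Rightarrow> vec set \<Rightarrow> (vec \<Rightarrow> vec) \<Rightarrow> bool" where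
  base: "elem_emb n r J n' r' J' f \<Longrightarrow> poly_emb n r J n' r' J' f"
| comp: "\<lbrakk> poly_emb n r J n1 r1 J1 f; elem_emb n1 r1 J1 n' r' J' g \<rbrakk>
         \<Longrightarrow> poly_emb n r J n' r' J' (g \<circ> f)"

definition pullback :: "vec set \<Rightarrow> (vec \<Rightarrow> vec) \<Rightarrow> (vec \<Rightarrow> 'a::zero) \<Rightarrow> vec \<Rightarrow> 'a" where
  "pullback J \<iota> \<rho> = (\<lambda>\<alpha>. if \<alpha> \<in> J then \<rho> (\<iota> \<alpha>) else 0)"

definition Gr_pullback :: "'a::{comm_monoid_mult, mult_zero} multiset set \<Rightarrow> nat \<Rightarrow> nat \<Rightarrow> vec set
    \<Rightarrow> nat \<Rightarrow> nat \<Rightarrow> vec set \<Rightarrow> (vec \<Rightarrow> vec) \<Rightarrow> (vec \<Rightarrow> 'a) set \<Rightarrow> (vec \<Rightarrow> 'a) set" where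
  "Gr_pullback N n r J n' r' J' \<iota> C = rep_class N n r J (pullback J \<iota> (SOME \<rho>. \<rho> \<in> C))"

end

theory Submission
  imports Defs
begin


lemma Delta_finite: "finite (Delta n r)"
proof -
  have "Delta n r \<subseteq> (\<lambda>g l. if l < n then g l else 0) ` ({..<n} \<rightarrow>\<^sub>E {..r})"
  proof
    fix \<alpha> assume a: "\<alpha> \<in> Delta n r"
    hence z: "\<forall>l\<ge>n. \<alpha> l = 0" and s: "(\<Sum>l<n. \<alpha> l) = r" by (auto simp: Delta_def)
    have le: "\<alpha> l \<le> r" if "l < n" for l
      using member_le_sum[of l "{..<n}" \<alpha>] that s by auto
    have "\<alpha> = (\<lambda>l. if l < n then restrict \<alpha> {..<n} l else 0)"
      using z by (auto simp: fun_eq_iff)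
    moreover have "restrict \<alpha> {..<n} \<in> {..<n} \<rightarrow>\<^sub>E {..r}" using le by auto
    ultimately show "\<alpha> \<in> (\<lambda>g l. if l < n then g l else 0) ` ({..<n} \<rightarrow>\<^sub>E {..r})" by blast
  qed
  thus ?thesis by (rule finite_subset) (intro finite_imageI finite_PiE; simp)
qed

lemma dmin_le: "finite A \<Longrightarrow> \<alpha> \<in> A \<Longrightarrow> dmin A l \<le> \<alpha> l"
  unfolding dmin_def by (auto intro: Min_le)

lemma dmax_ge: "finite A \<Longrightarrow> \<alpha> \<in> A \<Longrightarrow> \<alpha> l \<le> dmax A l"
  unfolding dmax_def by (auto intro: Max_ge)

lemma dmin_le_fun: "finite A \<Longrightarrow> \<alpha> \<in> A \<Longrightarrow> dmin A \<le> \<alpha>"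
  by (simp add: le_fun_def dmin_le)

lemma dmax_ge_fun: "finite A \<Longrightarrow> \<alpha> \<in> A \<Longrightarrow> \<alpha> \<le> dmax A"
  by (simp add: le_fun_def dmax_ge)

lemma dmin_in: "finite A \<Longrightarrow> A \<noteq> {} \<Longrightarrow> \<exists>\<alpha>\<in>A. \<alpha> l = dmin A l"
proof -
  assume "finite A" "A \<noteq> {}"
  hence "Min ((\<lambda>\<alpha>. \<alpha> l) ` A) \<in> (\<lambda>\<alpha>. \<alpha> l) ` A" by (intro Min_in) auto
  thus ?thesis unfolding dmin_def by auto
qed

lemma dmax_in: "finite A \<Longrightarrow> A \<noteq> {} \<Longrightarrow> \<exists>\<alpha>\<in>A. \<alpha> l = dmax A l"
proof -
  assume "finite A" "A \<noteq> {}"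
  hence "Max ((\<lambda>\<alpha>. \<alpha> l) ` A) \<in> (\<lambda>\<alpha>. \<alpha> l) ` A" by (intro Max_in) auto
  thus ?thesis unfolding dmax_def by auto
qed

lemma dmin_int_ge: "finite A \<Longrightarrow> A \<noteq> {} \<Longrightarrow> (\<forall>\<alpha>\<in>A. x \<le> int (\<alpha> l)) \<Longrightarrow> x \<le> int (dmin A l)"
  using dmin_in[of A l] by auto

lemma dmax_int_le: "finite A \<Longrightarrow> A \<noteq> {} \<Longrightarrow> (\<forall>\<alpha>\<in>A. int (\<alpha> l) \<le> x) \<Longrightarrow> int (dmax A l) \<le> x"
  using dmax_in[of A l] by auto

lemma dmax_van: "finite A \<Longrightarrow> A \<noteq> {} \<Longrightarrow> A \<subseteq> Delta n r \<Longrightarrow> n \<le> l \<Longrightarrow> dmax A l = 0"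
  using dmax_in[of A l] by (auto simp: Delta_def)

lemma fsum_cong: "(\<And>k. k \<in> K \<Longrightarrow> f k = g k) \<Longrightarrow> fsum K f = fsum K g"
  unfolding fsum_def
  by (cases "finite K") (auto intro!: arg_cong[where f="filter_mset _"] image_mset_cong)



lemma G:
  fixes N :: "'a::{comm_monoid_mult, mult_zero} multiset set" and \<phi> :: "vec \<Rightarrow> vec" and p q :: "nat \<Rightarrow> nat"
  assumes rep: "is_rep N n' r' J \<rho>"
  and finJ: "finite J" and neJ: "J \<noteq> {}" and JD: "J \<subseteq> Delta n' r'"
  and phiK: "\<forall>\<alpha>\<in>K. \<phi> \<alpha> \<in> J"
  and bk: "\<forall>v. dmin K \<le> v \<longrightarrow> v \<le> dmax K \<longrightarrow> \<phi> v \<in> J \<longrightarrow> v \<in> K"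
  and lin: "\<forall>v w. dmin K \<le> v \<longrightarrow> \<phi> (\<lambda>l. v l + w l) = (\<lambda>l. \<phi> v l + w (p l))"
  and pq: "\<forall>i l. (p l = i) = (l = q i)"
  and mono: "\<forall>v. dmin K \<le> v \<longrightarrow> v \<le> dmax K \<longrightarrow> dmin J \<le> \<phi> v \<and> \<phi> v \<le> dmax J"
  and dsum: "\<forall>v. dmin K \<le> v \<longrightarrow> (\<forall>l\<ge>n. v l = 0) \<longrightarrow> (\<forall>l\<ge>n'. \<phi> v l = 0) \<longrightarrow>
        int (\<Sum>l<n'. \<phi> v l) = int (\<Sum>l<n. v l) + int r' - int r"
  shows "is_rep N n r K (pullback K \<phi> \<rho>)"
proof -
  have supp: "{\<beta>. \<rho> \<beta> \<noteq> 0} = J" using rep by (simp add: is_rep_def)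
  have pb: "pullback K \<phi> \<rho> v = \<rho> (\<phi> v)" if "dmin K \<le> v" "v \<le> dmax K" for v
  proof (cases "v \<in> K")
    case True thus ?thesis by (simp add: pullback_def)
  next
    case False
    hence "\<phi> v \<notin> J" using bk that by blast
    thus ?thesis using False supp by (auto simp: pullback_def)
  qed
  have unitp: "unitv i (p l) = unitv (q i) l" for i l using pq by (simp add: unitv_def)
  have vanJ: "dmax J l = 0" if "n' \<le> l" for l using dmax_van[OF finJ neJ JD that] .
  show ?thesis unfolding is_rep_def
  proof (intro conjI allI impI)
    show "{\<alpha>. pullback K \<phi> \<rho> \<alpha> \<noteq> 0} = K"
      using supp phiK by (auto simp: pullback_def)
  next
    fix s \<alpha> and i j :: "nat \<Rightarrow> nat"
    assume s2: "2 \<le> s" and sr: "s \<le> r" and aD: "\<alpha> \<in> Delta n (r - s)" and amin: "dmin K \<le> \<alpha>"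
      and iN: "\<forall>k\<in>{0..s}. i k < n" and jN: "\<forall>k\<in>{2..s}. j k < n"
      and top: "(\<lambda>l. \<alpha> l + (\<Sum>m = 0..s. unitv (i m) l) + (\<Sum>m = 2..s. unitv (j m) l)) \<le> dmax K"
    define S where "S = (\<lambda>l. \<Sum>m = 0..s. unitv (i m) l)"
    define T where "T = (\<lambda>l. \<Sum>m = 2..s. unitv (j m) l)"
    define S' where "S' = (\<lambda>l. \<Sum>m = 0..s. unitv (q (i m)) l)"
    define T' where "T' = (\<lambda>l. \<Sum>m = 2..s. unitv (q (j m)) l)"
    define \<alpha>' where "\<alpha>' = \<phi> \<alpha>"
    have Sp: "S (p l) = S' l" for l unfolding S_def S'_def by (simp add: unitp)
    have Tp: "T (p l) = T' l" for l unfolding T_def T'_def by (simp add: unitp)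
    have top': "(\<lambda>l. \<alpha> l + (S l + T l)) \<le> dmax K" using top by (simp add: S_def T_def add.assoc)
    have aK: "\<alpha> \<le> dmax K" using top' by (auto simp: le_fun_def intro: order_trans[rotated])
    have mina: "dmin J \<le> \<alpha>'" using mono amin aK by (simp add: \<alpha>'_def)
    have phitop: "\<phi> (\<lambda>l. \<alpha> l + (S l + T l)) = (\<lambda>l. \<alpha>' l + (S' l + T' l))"
      using lin amin by (simp add: \<alpha>'_def Sp Tp)
    have topJ: "(\<lambda>l. \<alpha>' l + (S' l + T' l)) \<le> dmax J"
      using mono amin top' phitop
      by (metis (no_types, lifting) le_add1 le_fun_def order_trans)
    have topJl: "\<alpha>' l + (S' l + T' l) \<le> dmax J l" for l using topJ by (simp add: le_fun_def)
    have a'van: "\<alpha>' l = 0" if "n' \<le> l" for l using topJl[of l] vanJ[OF that] by simp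
    have Sge: "unitv (i k) l \<le> S l" if "k \<in> {0..s}" for k l
      unfolding S_def by (rule member_le_sum) (use that in auto)
    have S'ge: "unitv (q (i k)) l \<le> S' l" if "k \<in> {0..s}" for k l
      unfolding S'_def by (rule member_le_sum[where f="\<lambda>m. unitv (q (i m)) l"]) (use that in auto)
    have T'ge: "unitv (q (j k)) l \<le> T' l" if "k \<in> {2..s}" for k l
      unfolding T'_def by (rule member_le_sum[where f="\<lambda>m. unitv (q (j m)) l"]) (use that in auto)
    have iN': "\<forall>k\<in>{0..s}. (q \<circ> i) k < n'"
    proof
      fix k assume k: "k \<in> {0..s}"
      have "1 \<le> S' (q (i k))" using S'ge[OF k, of "q (i k)"] by (simp add: unitv_def)
      hence "1 \<le> dmax J (q (i k))" using topJl[of "q (i k)"] by simp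
      thus "(q \<circ> i) k < n'" using vanJ by (metis comp_apply not_le not_one_le_zero)
    qed
    have jN': "\<forall>k\<in>{2..s}. (q \<circ> j) k < n'"
    proof
      fix k assume k: "k \<in> {2..s}"
      have "1 \<le> T' (q (j k))" using T'ge[OF k, of "q (j k)"] by (simp add: unitv_def)
      hence "1 \<le> dmax J (q (j k))" using topJl[of "q (j k)"] by simp
      thus "(q \<circ> j) k < n'" using vanJ by (metis comp_apply not_le not_one_le_zero)
    qed
    have avan: "\<forall>l\<ge>n. \<alpha> l = 0" and asum: "(\<Sum>l<n. \<alpha> l) = r - s" using aD by (auto simp: Delta_def)
    have "int (\<Sum>l<n'. \<alpha>' l) = int (r - s) + int r' - int r"
    proof -
      have "int (\<Sum>l<n'. \<alpha>' l) = int (\<Sum>l<n. \<alpha> l) + int r' - int r"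
        using dsum amin avan a'van unfolding \<alpha>'_def by blast
      thus ?thesis using asum by simp
    qed
    hence ds: "int (\<Sum>l<n'. \<alpha>' l) = int r' - int s" using sr by simp
    hence sr': "s \<le> r'" by linarith
    have "int (\<Sum>l<n'. \<alpha>' l) = int (r' - s)" using ds sr' by (simp only: of_nat_diff)
    hence "(\<Sum>l<n'. \<alpha>' l) = r' - s" by (simp only: of_nat_eq_iff)
    hence a'D: "\<alpha>' \<in> Delta n' (r' - s)" using a'van by (auto simp: Delta_def)
    have top2: "(\<lambda>l. \<alpha>' l + (\<Sum>m = 0..s. unitv ((q \<circ> i) m) l) + (\<Sum>m = 2..s. unitv ((q \<circ> j) m) l)) \<le> dmax J"
      using topJ by (simp add: S'_def T'_def add.assoc)
    have R: "fsum {0..s} (\<lambda>k.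
            \<rho> (\<lambda>l. \<alpha>' l + (\<Sum>m=0..s. unitv ((q \<circ> i) m) l) - unitv ((q \<circ> i) k) l) *
            \<rho> (\<lambda>l. \<alpha>' l + unitv ((q \<circ> i) k) l + (\<Sum>m=2..s. unitv ((q \<circ> j) m) l))) \<in> N"
      using rep s2 sr' a'D mina iN' jN' top2 unfolding is_rep_def by blast
    show "fsum {0..s} (\<lambda>k.
            pullback K \<phi> \<rho> (\<lambda>l. \<alpha> l + (\<Sum>m=0..s. unitv (i m) l) - unitv (i k) l) *
            pullback K \<phi> \<rho> (\<lambda>l. \<alpha> l + unitv (i k) l + (\<Sum>m=2..s. unitv (j m) l))) \<in> N"
    proof -
      have "fsum {0..s} (\<lambda>k.
            pullback K \<phi> \<rho> (\<lambda>l. \<alpha> l + (\<Sum>m=0..s. unitv (i m) l) - unitv (i k) l) *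
            pullback K \<phi> \<rho> (\<lambda>l. \<alpha> l + unitv (i k) l + (\<Sum>m=2..s. unitv (j m) l))) =
            fsum {0..s} (\<lambda>k.
            \<rho> (\<lambda>l. \<alpha>' l + (\<Sum>m=0..s. unitv ((q \<circ> i) m) l) - unitv ((q \<circ> i) k) l) *
            \<rho> (\<lambda>l. \<alpha>' l + unitv ((q \<circ> i) k) l + (\<Sum>m=2..s. unitv ((q \<circ> j) m) l)))"
      proof (rule fsum_cong)
        fix k assume k: "k \<in> {0..s}"
        have e1: "(\<lambda>l. \<alpha> l + (\<Sum>m=0..s. unitv (i m) l) - unitv (i k) l) = (\<lambda>l. \<alpha> l + (S l - unitv (i k) l))"
          using Sge[OF k] by (auto simp: S_def fun_eq_iff)
        have e1': "(\<lambda>l. \<alpha>' l + (\<Sum>m=0..s. unitv ((q \<circ> i) m) l) - unitv ((q \<circ> i) k) l) = (\<lambda>l. \<alpha>' l + (S' l - unitv (q (i k)) l))"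
          using S'ge[OF k] by (auto simp: S'_def fun_eq_iff)
        have e2: "(\<lambda>l. \<alpha> l + unitv (i k) l + (\<Sum>m=2..s. unitv (j m) l)) = (\<lambda>l. \<alpha> l + (unitv (i k) l + T l))"
          by (auto simp: T_def fun_eq_iff)
        have e2': "(\<lambda>l. \<alpha>' l + unitv ((q \<circ> i) k) l + (\<Sum>m=2..s. unitv ((q \<circ> j) m) l)) = (\<lambda>l. \<alpha>' l + (unitv (q (i k)) l + T' l))"
          by (auto simp: T'_def fun_eq_iff)
        have l1: "dmin K \<le> (\<lambda>l. \<alpha> l + (S l - unitv (i k) l))" using amin by (auto simp: le_fun_def intro: order_trans)
        have u1: "(\<lambda>l. \<alpha> l + (S l - unitv (i k) l)) \<le> dmax K" using top' by (auto simp: le_fun_def intro: order_trans[rotated])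
        have l2: "dmin K \<le> (\<lambda>l. \<alpha> l + (unitv (i k) l + T l))" using amin by (auto simp: le_fun_def intro: order_trans)
        have u2: "(\<lambda>l. \<alpha> l + (unitv (i k) l + T l)) \<le> dmax K" using top' Sge[OF k]
          by (auto simp: le_fun_def intro: order_trans[rotated])
        have p1: "\<phi> (\<lambda>l. \<alpha> l + (S l - unitv (i k) l)) = (\<lambda>l. \<alpha>' l + (S' l - unitv (q (i k)) l))"
          using lin amin by (simp add: \<alpha>'_def Sp unitp)
        have p2: "\<phi> (\<lambda>l. \<alpha> l + (unitv (i k) l + T l)) = (\<lambda>l. \<alpha>' l + (unitv (q (i k)) l + T' l))"
          using lin amin by (simp add: \<alpha>'_def Tp unitp)
        show "pullback K \<phi> \<rho> (\<lambda>l. \<alpha> l + (\<Sum>m=0..s. unitv (i m) l) - unitv (i k) l) *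
            pullback K \<phi> \<rho> (\<lambda>l. \<alpha> l + unitv (i k) l + (\<Sum>m=2..s. unitv (j m) l)) =
            \<rho> (\<lambda>l. \<alpha>' l + (\<Sum>m=0..s. unitv ((q \<circ> i) m) l) - unitv ((q \<circ> i) k) l) *
            \<rho> (\<lambda>l. \<alpha>' l + unitv ((q \<circ> i) k) l + (\<Sum>m=2..s. unitv ((q \<circ> j) m) l))"
          unfolding e1 e1' e2 e2' using pb[OF l1 u1] pb[OF l2 u2] p1 p2 by simp
      qed
      thus ?thesis using R by simp
    qed
  qed
qed



lemma shift_rep:
  fixes N :: "'a::{comm_monoid_mult, mult_zero} multiset set" and d :: "nat \<Rightarrow> int"
  assumes rep: "is_rep N n r' J \<rho>"
  and KD: "K \<subseteq> Delta n r" "K \<noteq> {}" and JD: "J \<subseteq> Delta n r'" "J \<noteq> {}"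
  and dvan: "\<forall>l\<ge>n. d l = 0"
  and a: "\<forall>\<alpha>\<in>K. (\<lambda>l. nat (int (\<alpha> l) + d l)) \<in> J"
  and b: "\<forall>l. int (dmin J l) \<le> int (dmin K l) + d l"
  and c: "\<forall>l. int (dmax K l) + d l \<le> int (dmax J l)"
  and dd: "\<forall>l. 0 \<le> int (dmin K l) + d l"
  and e: "\<forall>v. dmin K \<le> v \<longrightarrow> v \<le> dmax K \<longrightarrow> (\<lambda>l. nat (int (v l) + d l)) \<in> J \<longrightarrow> v \<in> K"
  shows "is_rep N n r K (pullback K (\<lambda>\<alpha> l. nat (int (\<alpha> l) + d l)) \<rho>)"
proof -
  have finK: "finite K" using KD Delta_finite finite_subset by blast
  have finJ: "finite J" using JD Delta_finite finite_subset by blast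
  have nn: "0 \<le> int (v l) + d l" if "dmin K \<le> v" for v l
    using dd[rule_format, of l] that by (auto simp: le_fun_def) (smt (verit) of_nat_mono)
  have hsum: "int (\<Sum>l<n. nat (int (v l) + d l)) = int (\<Sum>l<n. v l) + (\<Sum>l<n. d l)" if "dmin K \<le> v" for v
  proof -
    have "int (\<Sum>l<n. nat (int (v l) + d l)) = (\<Sum>l<n. int (v l) + d l)"
      unfolding of_nat_sum using nn[OF that] by (intro sum.cong) auto
    thus ?thesis by (simp add: sum.distrib of_nat_sum)
  qed
  obtain \<alpha>0 where a0: "\<alpha>0 \<in> K" using KD by blast
  have "int r' = int (\<Sum>l<n. nat (int (\<alpha>0 l) + d l))"
    using a a0 JD by (auto simp: Delta_def)
  also have "\<dots> = int (\<Sum>l<n. \<alpha>0 l) + (\<Sum>l<n. d l)" using hsum dmin_le_fun[OF finK a0] by blast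
  also have "int (\<Sum>l<n. \<alpha>0 l) = int r" using a0 KD by (auto simp: Delta_def)
  finally have rr: "(\<Sum>l<n. d l) = int r' - int r" by simp
  show ?thesis
  proof (rule G[where p=id and q=id and n'=n and r'=r' and J=J])
    show "is_rep N n r' J \<rho>" by fact
    show "finite J" by fact
    show "J \<noteq> {}" "J \<subseteq> Delta n r'" using JD by auto
    show "\<forall>\<alpha>\<in>K. (\<lambda>l. nat (int (\<alpha> l) + d l)) \<in> J" by fact
    show "\<forall>v. dmin K \<le> v \<longrightarrow> v \<le> dmax K \<longrightarrow> (\<lambda>l. nat (int (v l) + d l)) \<in> J \<longrightarrow> v \<in> K" by fact
    show "\<forall>v w. dmin K \<le> v \<longrightarrow> (\<lambda>l. nat (int (v l + w l) + d l)) = (\<lambda>l. nat (int (v l) + d l) + w (id l))"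
    proof (intro allI impI ext)
      fix v w l assume "dmin K \<le> v"
      from nn[OF this, of l] show "nat (int (v l + w l) + d l) = nat (int (v l) + d l) + w (id l)" by simp
    qed
    show "\<forall>i l. (id l = i) = (l = id i)" by auto
    show "\<forall>v. dmin K \<le> v \<longrightarrow> v \<le> dmax K \<longrightarrow> dmin J \<le> (\<lambda>l. nat (int (v l) + d l)) \<and> (\<lambda>l. nat (int (v l) + d l)) \<le> dmax J"
    proof (intro allI impI conjI)
      fix v assume v1: "dmin K \<le> v" and v2: "v \<le> dmax K"
      show "dmin J \<le> (\<lambda>l. nat (int (v l) + d l))" unfolding le_fun_def
      proof
        fix l
        have "dmin K l \<le> v l" using v1 by (simp add: le_fun_def)
        thus "dmin J l \<le> nat (int (v l) + d l)" using b[rule_format, of l] by linarith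
      qed
      show "(\<lambda>l. nat (int (v l) + d l)) \<le> dmax J" unfolding le_fun_def
      proof
        fix l
        have "v l \<le> dmax K l" using v2 by (simp add: le_fun_def)
        thus "nat (int (v l) + d l) \<le> dmax J l" using c[rule_format, of l] by linarith
      qed
    qed
    show "\<forall>v. dmin K \<le> v \<longrightarrow> (\<forall>l\<ge>n. v l = 0) \<longrightarrow> (\<forall>l\<ge>n. nat (int (v l) + d l) = 0) \<longrightarrow>
        int (\<Sum>l<n. nat (int (v l) + d l)) = int (\<Sum>l<n. v l) + int r' - int r"
      using hsum rr by simp
  qed
qed



lemma sum_van_ext: fixes v :: "nat \<Rightarrow> nat" assumes "\<forall>l\<ge>n. v l = 0" "n \<le> m"
  shows "(\<Sum>l<m. v l) = (\<Sum>l<n. v l)"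
  using assms(2) by (induction m rule: dec_induct) (use assms(1) in auto)

lemma sum_van_eq: fixes v :: "nat \<Rightarrow> nat" shows "(\<forall>l\<ge>n. v l = 0) \<Longrightarrow> (\<forall>l\<ge>n'. v l = 0) \<Longrightarrow> (\<Sum>l<n'. v l) = (\<Sum>l<n. (v l::nat))"
  using sum_van_ext[of n v "max n n'"] sum_van_ext[of n' v "max n n'"] by (metis max.cobounded1 max.cobounded2)

lemma same_rep:
  fixes N :: "'a::{comm_monoid_mult, mult_zero} multiset set"
  assumes rep: "is_rep N n' r J \<rho>"
  and JD: "J \<subseteq> Delta n r" "J \<subseteq> Delta n' r" "J \<noteq> {}"
  shows "is_rep N n r J (pullback J id \<rho>)"
proof (rule G[where p=id and q=id and n'=n' and r'=r and J=J])
  show "finite J" using JD Delta_finite finite_subset by blast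
  show "\<forall>v. dmin J \<le> v \<longrightarrow> (\<forall>l\<ge>n. v l = 0) \<longrightarrow> (\<forall>l\<ge>n'. id v l = 0) \<longrightarrow>
        int (\<Sum>l<n'. id v l) = int (\<Sum>l<n. v l) + int r - int r"
  proof (intro allI impI)
    fix v :: vec assume "\<forall>l\<ge>n. v l = 0" "\<forall>l\<ge>n'. id v l = 0"
    hence "(\<Sum>l<n'. v l) = (\<Sum>l<n. v l)" using sum_van_eq[of n v n'] by simp
    thus "int (\<Sum>l<n'. id v l) = int (\<Sum>l<n. v l) + int r - int r" by simp
  qed
qed (use assms in auto)

lemma perm_rep:
  fixes N :: "'a::{comm_monoid_mult, mult_zero} multiset set"
  assumes rep: "is_rep N n r J \<rho>"
  and \<sigma>: "\<sigma> permutes {..<n}"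
  and KD: "K \<subseteq> Delta n r" "K \<noteq> {}"
  and JK: "J = (\<lambda>\<alpha>. \<alpha> \<circ> inv \<sigma>) ` K"
  shows "is_rep N n r K (pullback K (\<lambda>\<alpha>. \<alpha> \<circ> inv \<sigma>) \<rho>)"
proof -
  have isg: "inv \<sigma> permutes {..<n}" using permutes_inv[OF \<sigma>] .
  have fix_: "inv \<sigma> l = l" if "n \<le> l" for l using permutes_not_in[OF isg] that by auto
  have sumeq: "(\<Sum>l<n. v (inv \<sigma> l)) = (\<Sum>l<n. v l)" for v :: vec
    using sum.permute[OF isg, of v] by (simp add: comp_def)
  have JD: "J \<subseteq> Delta n r"
    using KD(1) by (auto simp: JK Delta_def fix_ sumeq)
  have dminJ: "dmin J l = dmin K (inv \<sigma> l)" for l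
    by (simp add: dmin_def JK image_image)
  have dmaxJ: "dmax J l = dmax K (inv \<sigma> l)" for l
    by (simp add: dmax_def JK image_image)
  have ff: "v = v \<circ> inv \<sigma> \<circ> \<sigma>" for v :: vec
    by (simp add: fun_eq_iff permutes_inverses[OF \<sigma>])
  show ?thesis
  proof (rule G[where p="inv \<sigma>" and q=\<sigma> and n'=n and r'=r and J=J])
    show "finite J" using JD Delta_finite finite_subset by blast
    show "J \<noteq> {}" using KD JK by auto
    show "\<forall>v. dmin K \<le> v \<longrightarrow> v \<le> dmax K \<longrightarrow> v \<circ> inv \<sigma> \<in> J \<longrightarrow> v \<in> K"
    proof (intro allI impI)
      fix v assume "v \<circ> inv \<sigma> \<in> J"
      then obtain \<alpha> where "\<alpha> \<in> K" "v \<circ> inv \<sigma> = \<alpha> \<circ> inv \<sigma>" using JK by auto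
      thus "v \<in> K" using ff[of v] ff[of \<alpha>] by metis
    qed
    show "\<forall>i l. (inv \<sigma> l = i) = (l = \<sigma> i)" using permutes_inv_eq[OF \<sigma>] by auto
    show "\<forall>v. dmin K \<le> v \<longrightarrow> v \<le> dmax K \<longrightarrow> dmin J \<le> v \<circ> inv \<sigma> \<and> v \<circ> inv \<sigma> \<le> dmax J"
      by (auto simp: le_fun_def dminJ dmaxJ)
    show "\<forall>v. dmin K \<le> v \<longrightarrow> (\<forall>l\<ge>n. v l = 0) \<longrightarrow> (\<forall>l\<ge>n. (v \<circ> inv \<sigma>) l = 0) \<longrightarrow>
        int (\<Sum>l<n. (v \<circ> inv \<sigma>) l) = int (\<Sum>l<n. v l) + int r - int r"
      using sumeq by simp
  qed (use rep JD JK in auto)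
qed



context
  fixes J' :: "vec set" and \<nu> \<mu> :: vec and \<tau> :: "nat \<Rightarrow> int" and n r r' :: nat
  assumes J'D: "J' \<subseteq> Delta n r'"
    and KD: "emb_minor J' \<nu> \<mu> \<tau> \<subseteq> Delta n r" and Kne: "emb_minor J' \<nu> \<mu> \<tau> \<noteq> {}"
    and tau: "\<forall>l. - int (dmin (contraction (deletion J' \<nu>) \<mu>) l) \<le> \<tau> l"
begin

abbreviation "D \<equiv> deletion J' \<nu>"
abbreviation "C \<equiv> contraction D \<mu>"
abbreviation "K \<equiv> emb_minor J' \<nu> \<mu> \<tau>"

lemma finJ': "finite J'" using J'D Delta_finite finite_subset by blast
lemma DJ': "D \<subseteq> J'" by (auto simp: deletion_def)
lemma finD: "finite D" using DJ' finJ' finite_subset by blast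
lemma Ceq: "C = (\<lambda>\<alpha> l. \<alpha> l - \<mu> l) ` {\<alpha>\<in>D. (\<lambda>l. dmin D l + \<mu> l) \<le> \<alpha>}"
  by (auto simp: contraction_def)
lemma finC: "finite C" unfolding Ceq using finD by auto
lemma Keq: "K = (\<lambda>\<beta> l. nat (int (\<beta> l) + \<tau> l)) ` C"
  by (simp add: emb_minor_def translate_def)
lemma finK: "finite K" using KD Delta_finite finite_subset by blast
lemma Cne: "C \<noteq> {}" using Kne Keq by auto
lemma Dne: "D \<noteq> {}" using Cne Ceq by auto
lemma J'ne: "J' \<noteq> {}" using Dne DJ' by auto

lemma Cel: "\<gamma> \<in> C \<Longrightarrow> \<exists>\<beta>\<in>D. \<gamma> = (\<lambda>l. \<beta> l - \<mu> l) \<and> (\<forall>l. dmin D l + \<mu> l \<le> \<beta> l)"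
  unfolding Ceq by (auto simp: le_fun_def)

lemma Cpos: "\<gamma> \<in> C \<Longrightarrow> 0 \<le> int (\<gamma> l) + \<tau> l"
  using dmin_le[OF finC, of \<gamma> l] tau[rule_format, of l] by linarith

lemma Kel: "\<alpha> \<in> K \<Longrightarrow> \<exists>\<gamma>\<in>C. \<forall>l. int (\<alpha> l) = int (\<gamma> l) + \<tau> l"
proof -
  assume "\<alpha> \<in> K"
  then obtain \<gamma> where g: "\<gamma> \<in> C" "\<alpha> = (\<lambda>l. nat (int (\<gamma> l) + \<tau> l))" unfolding Keq by auto
  thus ?thesis using Cpos[OF g(1)] by auto
qed

lemma dminC_ge: "dmin D l \<le> dmin C l"
proof -
  have "\<forall>\<gamma>\<in>C. int (dmin D l) \<le> int (\<gamma> l)"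
  proof
    fix \<gamma> assume "\<gamma> \<in> C"
    then obtain \<beta> where "\<gamma> = (\<lambda>l. \<beta> l - \<mu> l)" "\<forall>l. dmin D l + \<mu> l \<le> \<beta> l" using Cel by blast
    thus "int (dmin D l) \<le> int (\<gamma> l)" by (smt (verit) le_diff_conv2 le_add2 order_trans of_nat_mono)
  qed
  thus ?thesis using dmin_int_ge[OF finC Cne] by fastforce
qed

lemma dmaxC_le: "int (dmax C l) + int (\<mu> l) \<le> int (dmax D l)"
proof -
  have "\<forall>\<gamma>\<in>C. int (\<gamma> l) \<le> int (dmax D l) - int (\<mu> l)"
  proof
    fix \<gamma> assume "\<gamma> \<in> C"
    then obtain \<beta> where "\<beta> \<in> D" "\<gamma> = (\<lambda>l. \<beta> l - \<mu> l)" "\<forall>l. dmin D l + \<mu> l \<le> \<beta> l" using Cel by blast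
    moreover have "\<beta> l \<le> dmax D l" using dmax_ge[OF finD \<open>\<beta> \<in> D\<close>] .
    ultimately show "int (\<gamma> l) \<le> int (dmax D l) - int (\<mu> l)" by (smt (verit) le_add2 of_nat_diff of_nat_mono order_trans)
  qed
  thus ?thesis using dmax_int_le[OF finC Cne] by fastforce
qed

lemma dminK_ge: "int (dmin C l) + \<tau> l \<le> int (dmin K l)"
proof -
  have "\<forall>\<alpha>\<in>K. int (dmin C l) + \<tau> l \<le> int (\<alpha> l)"
    using Kel dmin_le[OF finC] by fastforce
  thus ?thesis using dmin_int_ge[OF finK Kne] by blast
qed

lemma dmaxK_le: "int (dmax K l) \<le> int (dmax C l) + \<tau> l"
proof -
  have "\<forall>\<alpha>\<in>K. int (\<alpha> l) \<le> int (dmax C l) + \<tau> l"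
    using Kel dmax_ge[OF finC] by fastforce
  thus ?thesis using dmax_int_le[OF finK Kne] by blast
qed

lemma dminD_ge: "dmin J' l \<le> dmin D l"
proof -
  obtain \<alpha> where "\<alpha> \<in> D" "\<alpha> l = dmin D l" using dmin_in[OF finD Dne, of l] by blast
  thus ?thesis using DJ' dmin_le[OF finJ', of \<alpha> l] by auto
qed

lemma dmaxD_le: "dmax D l \<le> dmax J' l - \<nu> l"
proof -
  obtain \<alpha> where "\<alpha> \<in> D" "\<alpha> l = dmax D l" using dmax_in[OF finD Dne, of l] by blast
  moreover have "\<alpha> l \<le> dmax J' l - \<nu> l" using \<open>\<alpha> \<in> D\<close> unfolding deletion_def le_fun_def by auto
  ultimately show ?thesis by simp
qed

definition dd :: "nat \<Rightarrow> int" where "dd l = int (\<mu> l) - \<tau> l"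

lemma fK: "\<alpha> \<in> K \<Longrightarrow> (\<lambda>l. nat (int (\<alpha> l) + dd l)) \<in> J'"
proof -
  assume "\<alpha> \<in> K"
  then obtain \<gamma> where g: "\<gamma> \<in> C" "\<forall>l. int (\<alpha> l) = int (\<gamma> l) + \<tau> l" using Kel by blast
  then obtain \<beta> where b: "\<beta> \<in> D" "\<gamma> = (\<lambda>l. \<beta> l - \<mu> l)" "\<forall>l. dmin D l + \<mu> l \<le> \<beta> l" using Cel by blast
  have "(\<lambda>l. nat (int (\<alpha> l) + dd l)) = \<beta>"
  proof
    fix l
    have "\<mu> l \<le> \<beta> l" using b(3)[rule_format, of l] by simp
    thus "nat (int (\<alpha> l) + dd l) = \<beta> l" using g(2)[rule_format, of l] b(2) by (simp add: dd_def of_nat_diff)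
  qed
  thus ?thesis using b(1) DJ' by auto
qed

lemma ddpos: "0 \<le> int (dmin K l) + dd l"
  using dminK_ge[of l] unfolding dd_def by linarith

lemma bnd_lo: "int (dmin J' l) \<le> int (dmin K l) + dd l"
  using dminK_ge[of l] dminC_ge[of l] dminD_ge[of l] unfolding dd_def by linarith

lemma bnd_hi: "int (dmax K l) + dd l \<le> int (dmax J' l)"
  using dmaxK_le[of l] dmaxC_le[of l] dmaxD_le[of l] unfolding dd_def by linarith

lemma backK: "dmin K \<le> v \<Longrightarrow> v \<le> dmax K \<Longrightarrow> (\<lambda>l. nat (int (v l) + dd l)) \<in> J' \<Longrightarrow> v \<in> K"
proof -
  assume v1: "dmin K \<le> v" and v2: "v \<le> dmax K" and inJ: "(\<lambda>l. nat (int (v l) + dd l)) \<in> J'"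
  define \<beta> where "\<beta> = (\<lambda>l. nat (int (v l) + dd l))"
  have bl: "int (\<beta> l) = int (v l) + dd l" for l
    using ddpos[of l] v1 unfolding \<beta>_def le_fun_def by (smt (verit) int_nat_eq of_nat_mono)
  have up: "\<beta> l \<le> dmax J' l - \<nu> l" for l
  proof -
    have "v l \<le> dmax K l" using v2 by (simp add: le_fun_def)
    thus ?thesis using bl[of l] dmaxK_le[of l] dmaxC_le[of l] dmaxD_le[of l] unfolding dd_def by linarith
  qed
  have bD: "\<beta> \<in> D" using inJ up unfolding deletion_def \<beta>_def by (auto simp: le_fun_def)
  have lo: "dmin D l + \<mu> l \<le> \<beta> l" for l
  proof -
    have "dmin K l \<le> v l" using v1 by (simp add: le_fun_def)
    thus ?thesis using bl[of l] dminK_ge[of l] dminC_ge[of l] unfolding dd_def by linarith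
  qed
  have gC: "(\<lambda>l. \<beta> l - \<mu> l) \<in> C" using bD lo unfolding Ceq by (auto simp: le_fun_def)
  have "v = (\<lambda>l. nat (int (\<beta> l - \<mu> l) + \<tau> l))"
  proof
    fix l
    have "\<mu> l \<le> \<beta> l" using lo[of l] by simp
    thus "v l = nat (int (\<beta> l - \<mu> l) + \<tau> l)" using bl[of l] unfolding dd_def by (simp add: of_nat_diff)
  qed
  thus "v \<in> K" unfolding Keq by (rule image_eqI[where x="\<lambda>l. \<beta> l - \<mu> l"]) (use gC in auto)
qed

lemma fmap_eq: "(\<lambda>\<alpha> l. nat (int (\<alpha> l) + int (\<mu> l) - \<tau> l)) = (\<lambda>\<alpha> l. nat (int (\<alpha> l) + dd l))"
  by (simp add: dd_def fun_eq_iff add_diff_eq)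


lemma minor_fwd:
  fixes N :: "'a::{comm_monoid_mult, mult_zero} multiset set"
  assumes rep: "is_rep N n r' J' \<rho>" and van: "\<forall>l\<ge>n. \<mu> l = 0" "\<forall>l\<ge>n. \<tau> l = 0"
  shows "is_rep N n r K (pullback K (\<lambda>\<alpha> l. nat (int (\<alpha> l) + int (\<mu> l) - \<tau> l)) \<rho>)"
  unfolding fmap_eq
proof (rule shift_rep[OF rep KD Kne J'D J'ne])
  show "\<forall>l\<ge>n. dd l = 0" using van by (simp add: dd_def)
qed (use fK bnd_lo bnd_hi ddpos backK in auto)

lemma minor_inv:
  fixes N :: "'a::{comm_monoid_mult, mult_zero} multiset set"
  assumes rep: "is_rep N n r K \<pi>" and van: "\<forall>l\<ge>n. \<mu> l = 0" "\<forall>l\<ge>n. \<tau> l = 0"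
    and bij: "bij_betw (\<lambda>\<alpha> l. nat (int (\<alpha> l) + int (\<mu> l) - \<tau> l)) K J'"
  shows "\<exists>\<rho>. is_rep N n r' J' \<rho> \<and> pullback K (\<lambda>\<alpha> l. nat (int (\<alpha> l) + int (\<mu> l) - \<tau> l)) \<rho> = \<pi>"
proof -
  define f where "f = (\<lambda>(\<alpha>::vec) l. nat (int (\<alpha> l) + dd l))"
  define h where "h = (\<lambda>(\<beta>::vec) l. nat (int (\<beta> l) + - dd l))"
  have J'eq: "J' = f ` K" using bij bij_betw_imp_surj_on unfolding fmap_eq f_def by metis
  have fl: "int (f \<alpha> l) = int (\<alpha> l) + dd l" if "\<alpha> \<in> K" for \<alpha> l
    using ddpos[of l] dmin_le[OF finK that, of l] unfolding f_def by linarith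
  have hf: "h (f \<alpha>) = \<alpha>" if "\<alpha> \<in> K" for \<alpha>
    unfolding h_def using fl[OF that] by (simp add: fun_eq_iff)
  have b: "\<forall>l. int (dmin K l) \<le> int (dmin J' l) + - dd l"
  proof
    fix l
    have "\<forall>\<beta>\<in>J'. int (dmin K l) + dd l \<le> int (\<beta> l)"
    proof
      fix \<beta> assume "\<beta> \<in> J'"
      then obtain \<alpha> where "\<alpha> \<in> K" "\<beta> = f \<alpha>" using J'eq by auto
      thus "int (dmin K l) + dd l \<le> int (\<beta> l)" using fl[of \<alpha> l] dmin_le[OF finK, of \<alpha> l] by simp
    qed
    thus "int (dmin K l) \<le> int (dmin J' l) + - dd l" using dmin_int_ge[OF finJ' J'ne] by fastforce
  qed
  have c: "\<forall>l. int (dmax J' l) + - dd l \<le> int (dmax K l)"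
  proof
    fix l
    have "\<forall>\<beta>\<in>J'. int (\<beta> l) \<le> int (dmax K l) + dd l"
    proof
      fix \<beta> assume "\<beta> \<in> J'"
      then obtain \<alpha> where "\<alpha> \<in> K" "\<beta> = f \<alpha>" using J'eq by auto
      thus "int (\<beta> l) \<le> int (dmax K l) + dd l" using fl[of \<alpha> l] dmax_ge[OF finK, of \<alpha> l] by simp
    qed
    thus "int (dmax J' l) + - dd l \<le> int (dmax K l)" using dmax_int_le[OF finJ' J'ne] by fastforce
  qed
  have ddp: "\<forall>l. 0 \<le> int (dmin J' l) + - dd l" using b by (smt (verit) of_nat_0_le_iff)
  have e: "\<forall>v. dmin J' \<le> v \<longrightarrow> v \<le> dmax J' \<longrightarrow> h v \<in> K \<longrightarrow> v \<in> J'"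
  proof (intro allI impI)
    fix v assume v1: "dmin J' \<le> v" and "h v \<in> K"
    have "f (h v) = v"
    proof
      fix l
      have "dmin J' l \<le> v l" using v1 by (simp add: le_fun_def)
      thus "f (h v) l = v l" using ddp[rule_format, of l] unfolding f_def h_def by simp
    qed
    thus "v \<in> J'" using fK[OF \<open>h v \<in> K\<close>] unfolding f_def by metis
  qed
  have a: "\<forall>\<beta>\<in>J'. h \<beta> \<in> K"
  proof
    fix \<beta> assume "\<beta> \<in> J'"
    then obtain \<alpha> where "\<alpha> \<in> K" "\<beta> = f \<alpha>" using J'eq by auto
    thus "h \<beta> \<in> K" using hf by simp
  qed
  have R: "is_rep N n r' J' (pullback J' h \<pi>)"
    unfolding h_def
  proof (rule shift_rep[OF rep J'D J'ne KD Kne])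
    show "\<forall>l\<ge>n. - dd l = 0" using van by (simp add: dd_def)
  qed (use a b c ddp e in \<open>auto simp: h_def\<close>)
  have supp: "{\<alpha>. \<pi> \<alpha> \<noteq> 0} = K" using rep by (simp add: is_rep_def)
  have "pullback K f (pullback J' h \<pi>) = \<pi>"
  proof
    fix \<alpha>
    show "pullback K f (pullback J' h \<pi>) \<alpha> = \<pi> \<alpha>"
    proof (cases "\<alpha> \<in> K")
      case True
      hence "f \<alpha> \<in> J'" using J'eq by auto
      thus ?thesis using True hf by (simp add: pullback_def)
    next
      case False thus ?thesis using supp by (auto simp: pullback_def)
    qed
  qed
  thus ?thesis using R unfolding fmap_eq f_def by blast
qed


lemma minor_inj: "inj_on (\<lambda>\<alpha> l. nat (int (\<alpha> l) + int (\<mu> l) - \<tau> l)) K"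
  unfolding fmap_eq
proof (rule inj_onI)
  fix \<alpha> \<beta> assume a: "\<alpha> \<in> K" and b: "\<beta> \<in> K"
    and e: "(\<lambda>l. nat (int (\<alpha> l) + dd l)) = (\<lambda>l. nat (int (\<beta> l) + dd l))"
  show "\<alpha> = \<beta>"
  proof
    fix l
    have "nat (int (\<alpha> l) + dd l) = nat (int (\<beta> l) + dd l)" using e by metis
    moreover have "0 \<le> int (\<alpha> l) + dd l" "0 \<le> int (\<beta> l) + dd l"
      using ddpos[of l] dmin_le[OF finK a, of l] dmin_le[OF finK b, of l] by linarith+
    ultimately show "\<alpha> l = \<beta> l" by linarith
  qed
qed

end



lemma Mc_D: "M_convex n r J \<Longrightarrow> J \<subseteq> Delta n r \<and> J \<noteq> {}"
  by (simp add: M_convex_def)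

lemma Mc_sub: "M_convex n r J \<Longrightarrow> J \<subseteq> Delta n r" by (simp add: M_convex_def)
lemma Mc_ne: "M_convex n r J \<Longrightarrow> J \<noteq> {}" by (simp add: M_convex_def)

lemma supp_pull_id: "is_rep N n r J \<rho> \<Longrightarrow> pullback J id \<rho> = \<rho>"
  unfolding is_rep_def pullback_def by (auto simp: fun_eq_iff)

lemma perm_inj: "\<sigma> permutes S \<Longrightarrow> inj_on (\<lambda>\<alpha>::vec. \<alpha> \<circ> inv \<sigma>) X"
proof (rule inj_onI)
  fix \<alpha> \<beta> :: vec assume s: "\<sigma> permutes S" and "\<alpha> \<circ> inv \<sigma> = \<beta> \<circ> inv \<sigma>"
  hence "\<alpha> \<circ> inv \<sigma> \<circ> \<sigma> = \<beta> \<circ> inv \<sigma> \<circ> \<sigma>" by simp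
  thus "\<alpha> = \<beta>" by (simp add: comp_assoc permutes_inv_o[OF s])
qed

lemma elem_maps: "elem_emb n r J n' r' J' f \<Longrightarrow> (\<forall>\<alpha>\<in>J. f \<alpha> \<in> J') \<and> inj_on f J"
proof (induction rule: elem_emb.induct)
  case (minor n r' J' r \<nu> \<mu> \<tau>)
  note m = Mc_sub[OF minor(1)] Mc_sub[OF minor(2)] Mc_ne[OF minor(2)]
  have "\<forall>\<alpha>\<in>emb_minor J' \<nu> \<mu> \<tau>. (\<lambda>l. nat (int (\<alpha> l) + int (\<mu> l) - \<tau> l)) \<in> J'"
  proof
    fix \<alpha> assume a: "\<alpha> \<in> emb_minor J' \<nu> \<mu> \<tau>"
    have "(\<lambda>l. nat (int (\<alpha> l) + int (\<mu> l) - \<tau> l)) = (\<lambda>l. nat (int (\<alpha> l) + dd \<mu> \<tau> l))"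
      using fun_cong[OF fmap_eq[OF m(1) m(2) m(3) minor(8)], of \<alpha>] by simp
    thus "(\<lambda>l. nat (int (\<alpha> l) + int (\<mu> l) - \<tau> l)) \<in> J'" using fK[OF m(1) m(2) m(3) minor(8) a] by simp
  qed
  thus ?case using minor_inj[OF m(1) m(2) m(3) minor(8)] by simp
next
  case (perm \<sigma> n r J)
  then show ?case using perm_inj[OF perm(1), of J] by blast
qed auto

lemma elem_pull:
  fixes N :: "'a::{comm_monoid_mult, mult_zero} multiset set"
  shows "elem_emb n r J n' r' J' f \<Longrightarrow> is_rep N n' r' J' \<rho> \<Longrightarrow> is_rep N n r J (pullback J f \<rho>)"
proof (induction rule: elem_emb.induct)
  case (minor n r' J' r \<nu> \<mu> \<tau>)
  note m = Mc_sub[OF minor(1)] Mc_sub[OF minor(2)] Mc_ne[OF minor(2)]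
  show ?case using minor_fwd[OF m(1) m(2) m(3) minor(8) minor(9) minor(4) minor(5)] .
next
  case (perm \<sigma> n r J)
  show ?case using perm_rep[OF perm(4) perm(1)] Mc_D[OF perm(2)] by blast
next
  case (extension n r J)
  show ?case using same_rep[OF extension(3)] Mc_D[OF extension(1)] Mc_D[OF extension(2)] by blast
next
  case (restriction n r J)
  show ?case using same_rep[OF restriction(3)] Mc_D[OF restriction(1)] Mc_D[OF restriction(2)] by blast
qed

lemma elem_surj:
  fixes N :: "'a::{comm_monoid_mult, mult_zero} multiset set"
  shows "elem_emb n r J n' r' J' f \<Longrightarrow> bij_betw f J J' \<Longrightarrow> is_rep N n r J \<pi> \<Longrightarrow>
     \<exists>\<rho>. is_rep N n' r' J' \<rho> \<and> pullback J f \<rho> = \<pi>"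
proof (induction rule: elem_emb.induct)
  case (minor n r' J' r \<nu> \<mu> \<tau>)
  note m = Mc_sub[OF minor(1)] Mc_sub[OF minor(2)] Mc_ne[OF minor(2)]
  show ?case using minor_inv[OF m(1) m(2) m(3) minor(8) minor(10) minor(4) minor(5) minor(9)] .
next
  case (perm \<sigma> n r J)
  have isg: "inv \<sigma> permutes {..<n}" using permutes_inv[OF perm(1)] .
  have ii: "inv (inv \<sigma>) = \<sigma>" using permutes_inv_inv[OF perm(1)] .
  have img: "J = (\<lambda>\<alpha>. \<alpha> \<circ> inv (inv \<sigma>)) ` ((\<lambda>\<alpha>. \<alpha> \<circ> inv \<sigma>) ` J)"
    by (simp add: ii image_image comp_assoc permutes_inv_o[OF perm(1)])
  have R: "is_rep N n r ((\<lambda>\<alpha>. \<alpha> \<circ> inv \<sigma>) ` J) (pullback ((\<lambda>\<alpha>. \<alpha> \<circ> inv \<sigma>) ` J) (\<lambda>\<alpha>. \<alpha> \<circ> inv (inv \<sigma>)) \<pi>)"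
    using perm_rep[OF perm(5) isg _ _ img] Mc_D[OF perm(3)] by blast
  have supp: "{\<alpha>. \<pi> \<alpha> \<noteq> 0} = J" using perm(5) by (simp add: is_rep_def)
  have "pullback J (\<lambda>\<alpha>. \<alpha> \<circ> inv \<sigma>) (pullback ((\<lambda>\<alpha>. \<alpha> \<circ> inv \<sigma>) ` J) (\<lambda>\<alpha>. \<alpha> \<circ> inv (inv \<sigma>)) \<pi>) = \<pi>"
    using supp by (auto simp: fun_eq_iff pullback_def ii comp_assoc permutes_inv_o[OF perm(1)])
  thus ?case using R by blast
next
  case (extension n r J)
  show ?case using same_rep[OF extension(4)] Mc_D[OF extension(1)] Mc_D[OF extension(2)]
    supp_pull_id[OF extension(4)] by (metis supp_pull_id)
next
  case (restriction n r J)
  show ?case using same_rep[OF restriction(4)] Mc_D[OF restriction(1)] Mc_D[OF restriction(2)]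
    supp_pull_id[OF restriction(4)] by (metis supp_pull_id)
qed




lemma poly_maps: "poly_emb n r J n' r' J' f \<Longrightarrow> (\<forall>\<alpha>\<in>J. f \<alpha> \<in> J') \<and> inj_on f J"
proof (induction rule: poly_emb.induct)
  case (base n r J n' r' J' f)
  then show ?case using elem_maps by blast
next
  case (comp n r J n1 r1 J1 f n' r' J' g)
  have g: "(\<forall>\<alpha>\<in>J1. g \<alpha> \<in> J') \<and> inj_on g J1" using elem_maps[OF comp(2)] .
  have fm: "\<forall>\<alpha>\<in>J. f \<alpha> \<in> J1" and fi: "inj_on f J" using comp(3) by auto
  have gm: "\<forall>\<alpha>\<in>J1. g \<alpha> \<in> J'" and gi: "inj_on g J1" using g by auto
  have sub: "f ` J \<subseteq> J1" using fm by auto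
  have "inj_on (g \<circ> f) J" using comp_inj_on[OF fi inj_on_subset[OF gi sub]] .
  moreover have "\<forall>\<alpha>\<in>J. (g \<circ> f) \<alpha> \<in> J'" using fm gm by auto
  ultimately show ?case by blast
qed

lemma pull_comp: "\<forall>\<alpha>\<in>J. f \<alpha> \<in> J1 \<Longrightarrow> pullback J (g \<circ> f) \<rho> = pullback J f (pullback J1 g \<rho>)"
  by (auto simp: pullback_def fun_eq_iff)

lemma poly_pull:
  fixes N :: "'a::{comm_monoid_mult, mult_zero} multiset set"
  shows "poly_emb n r J n' r' J' f \<Longrightarrow> is_rep N n' r' J' \<rho> \<Longrightarrow> is_rep N n r J (pullback J f \<rho>)"
proof (induction arbitrary: \<rho> rule: poly_emb.induct)
  case (base n r J n' r' J' f)
  then show ?case using elem_pull by blast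
next
  case (comp n r J n1 r1 J1 f n' r' J' g)
  have "is_rep N n1 r1 J1 (pullback J1 g \<rho>)" using elem_pull[OF comp(2) comp(4)] .
  hence "is_rep N n r J (pullback J f (pullback J1 g \<rho>))" using comp(3) by blast
  moreover have m: "\<forall>\<alpha>\<in>J. f \<alpha> \<in> J1" using poly_maps[OF comp(1)] by blast
  ultimately show ?case by (simp only: pull_comp[OF m])
qed

lemma poly_surj:
  fixes N :: "'a::{comm_monoid_mult, mult_zero} multiset set"
  shows "poly_emb n r J n' r' J' f \<Longrightarrow> bij_betw f J J' \<Longrightarrow> is_rep N n r J \<pi> \<Longrightarrow>
     \<exists>\<rho>. is_rep N n' r' J' \<rho> \<and> pullback J f \<rho> = \<pi>"
proof (induction arbitrary: \<pi> rule: poly_emb.induct)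
  case (base n r J n' r' J' f)
  then show ?case using elem_surj by blast
next
  case (comp n r J n1 r1 J1 f n' r' J' g)
  have f: "(\<forall>\<alpha>\<in>J. f \<alpha> \<in> J1) \<and> inj_on f J" using poly_maps[OF comp(1)] .
  have g: "(\<forall>\<alpha>\<in>J1. g \<alpha> \<in> J') \<and> inj_on g J1" using elem_maps[OF comp(2)] .
  have gf: "(g \<circ> f) ` J = J'" using comp(4) by (simp add: bij_betw_def)
  have fJ: "f ` J = J1"
  proof
    show "f ` J \<subseteq> J1" using f by auto
    show "J1 \<subseteq> f ` J"
    proof
      fix y assume y: "y \<in> J1"
      hence "g y \<in> (g \<circ> f) ` J" using g gf by auto
      then obtain x where x: "x \<in> J" "g y = g (f x)" by auto
      hence "y = f x" using g y f by (meson inj_onD)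
      thus "y \<in> f ` J" using x by auto
    qed
  qed
  have bf: "bij_betw f J J1" using f fJ by (simp add: bij_betw_def)
  have "g ` J1 = g ` f ` J" using fJ by simp
  also have "\<dots> = (g \<circ> f) ` J" by (simp only: image_comp)
  finally have gJ: "g ` J1 = J'" using gf by simp
  have bg: "bij_betw g J1 J'" using g gJ by (simp add: bij_betw_def)
  obtain \<rho>1 where r1: "is_rep N n1 r1 J1 \<rho>1" "pullback J f \<rho>1 = \<pi>" using comp(3)[OF bf comp(5)] by blast
  obtain \<rho> where r: "is_rep N n' r' J' \<rho>" "pullback J1 g \<rho> = \<rho>1" using elem_surj[OF comp(2) bg r1(1)] by blast
  have "pullback J (g \<circ> f) \<rho> = pullback J f (pullback J1 g \<rho>)" using pull_comp[of J f J1 g \<rho>] f by blast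
  hence "pullback J (g \<circ> f) \<rho> = \<pi>" using r1(2) r(2) by simp
  thus ?case using r by blast
qed



lemma rep_equiv:
  fixes N :: "'a::{comm_monoid_mult, mult_zero} multiset set"
  assumes t: "tract N"
  shows "equiv (reps N n r J) (rep_rel N n r J)"
proof (rule equivI)
  have one: "(0::'a) \<noteq> 1" and nz: "\<And>x y::'a. x \<noteq> 0 \<Longrightarrow> y \<noteq> 0 \<Longrightarrow> x * y \<noteq> 0"
    and inv: "\<And>x::'a. x \<noteq> 0 \<Longrightarrow> \<exists>y. x * y = 1" using t by (auto simp: tract_def)
  show "rep_rel N n r J \<subseteq> reps N n r J \<times> reps N n r J" by (auto simp: rep_rel_def)
  show "refl_on (reps N n r J) (rep_rel N n r J)"
    unfolding refl_on_def
  proof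
    fix \<rho> assume r: "\<rho> \<in> reps N n r J"
    have "(1::'a) \<noteq> 0 \<and> \<rho> = (\<lambda>\<beta>. 1 * \<rho> \<beta>)" using one by simp
    hence "\<exists>a. a \<noteq> 0 \<and> \<rho> = (\<lambda>\<beta>. a * \<rho> \<beta>)" by blast
    thus "(\<rho>, \<rho>) \<in> rep_rel N n r J" using r by (simp only: rep_rel_def mem_Collect_eq case_prod_conv)
  qed
  have RR: "(x, y) \<in> rep_rel N n r J \<longleftrightarrow> x \<in> reps N n r J \<and> y \<in> reps N n r J \<and> (\<exists>a. a \<noteq> 0 \<and> y = (\<lambda>\<beta>. a * x \<beta>))" for x y
    unfolding rep_rel_def mem_Collect_eq case_prod_conv ..
  show "sym (rep_rel N n r J)"
  proof (rule symI)
    fix \<rho> \<sigma> assume "(\<rho>, \<sigma>) \<in> rep_rel N n r J"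
    then obtain a where a: "\<rho> \<in> reps N n r J" "\<sigma> \<in> reps N n r J" "a \<noteq> 0" "\<sigma> = (\<lambda>\<beta>. a * \<rho> \<beta>)"
      unfolding RR by blast
    obtain b where b: "a * b = 1" using inv[OF a(3)] by blast
    have "b \<noteq> 0" using b one by auto
    moreover have "\<rho> = (\<lambda>\<beta>. b * \<sigma> \<beta>)" using b a(4) by (simp add: fun_eq_iff mult.assoc[symmetric] mult.commute[of b a])
    ultimately show "(\<sigma>, \<rho>) \<in> rep_rel N n r J" using a unfolding RR by blast
  qed
  show "trans (rep_rel N n r J)"
  proof (rule transI)
    fix \<rho> \<sigma> \<tau> assume r1: "(\<rho>, \<sigma>) \<in> rep_rel N n r J" and r2: "(\<sigma>, \<tau>) \<in> rep_rel N n r J"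
    obtain a where a: "\<rho> \<in> reps N n r J" "a \<noteq> 0" "\<sigma> = (\<lambda>\<beta>. a * \<rho> \<beta>)"
      using r1 unfolding RR by blast
    obtain b where b: "\<tau> \<in> reps N n r J" "b \<noteq> 0" "\<tau> = (\<lambda>\<beta>. b * \<sigma> \<beta>)"
      using r2 unfolding RR by blast
    have "\<tau> = (\<lambda>\<beta>. (b * a) * \<rho> \<beta>)" using a(3) b(3) by (simp add: fun_eq_iff mult.assoc)
    moreover have "b * a \<noteq> 0" using nz a(2) b(2) by blast
    ultimately show "(\<rho>, \<tau>) \<in> rep_rel N n r J" using a b unfolding RR by blast
  qed
qed


lemma rel_pull:
  fixes N :: "'a::{comm_monoid_mult, mult_zero} multiset set"
  assumes pe: "poly_emb n r J n' r' J' \<iota>" and rel: "(\<rho>, \<sigma>) \<in> rep_rel N n' r' J'"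
  shows "(pullback J \<iota> \<rho>, pullback J \<iota> \<sigma>) \<in> rep_rel N n r J"
proof -
  obtain a where a: "\<rho> \<in> reps N n' r' J'" "\<sigma> \<in> reps N n' r' J'" "a \<noteq> 0" "\<sigma> = (\<lambda>\<beta>. a * \<rho> \<beta>)"
    using rel unfolding rep_rel_def by blast
  have p1: "pullback J \<iota> \<rho> \<in> reps N n r J" using a(1) poly_pull[OF pe] by (simp add: reps_def)
  have p2: "pullback J \<iota> \<sigma> \<in> reps N n r J" using a(2) poly_pull[OF pe] by (simp add: reps_def)
  have "pullback J \<iota> \<sigma> = (\<lambda>\<beta>. a * pullback J \<iota> \<rho> \<beta>)" using a(4) by (simp add: pullback_def fun_eq_iff)
  thus ?thesis using p1 p2 a(3) unfolding rep_rel_def by blast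
qed

theorem theoremE:
  fixes N :: "'a::{comm_monoid_mult, mult_zero} multiset set"
    and n r n' r' :: nat and J J' :: "vec set" and \<iota> :: "vec \<Rightarrow> vec"
  assumes "tract N" and "near_idempotent N"
    and "M_convex n r J" and "M_convex n' r' J'"
    and "poly_emb n r J n' r' J' \<iota>"
  shows "(\<forall>\<rho>\<in>reps N n' r' J'. pullback J \<iota> \<rho> \<in> reps N n r J)
    \<and> (\<forall>\<rho>\<in>reps N n' r' J'.
          Gr_pullback N n r J n' r' J' \<iota> (rep_class N n' r' J' \<rho>) = rep_class N n r J (pullback J \<iota> \<rho>))
    \<and> Gr_pullback N n r J n' r' J' \<iota> \<in> Gr N n' r' J' \<rightarrow> Gr N n r J
    \<and> (bij_betw \<iota> J J' \<longrightarrow> bij_betw (Gr_pullback N n r J n' r' J' \<iota>) (Gr N n' r' J') (Gr N n r J))"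
proof -
  note pe = assms(5)
  have eqJ': "equiv (reps N n' r' J') (rep_rel N n' r' J')" using rep_equiv[OF assms(1)] .
  have eqJ: "equiv (reps N n r J) (rep_rel N n r J)" using rep_equiv[OF assms(1)] .
  define F where "F = Gr_pullback N n r J n' r' J' \<iota>"
  define P where "P = (pullback J \<iota> :: (vec \<Rightarrow> 'a) \<Rightarrow> vec \<Rightarrow> 'a)"
  have P1: "\<forall>\<rho>\<in>reps N n' r' J'. P \<rho> \<in> reps N n r J"
    using poly_pull[OF pe, where N=N] by (simp add: reps_def P_def)
  have P2: "F (rep_class N n' r' J' \<rho>) = rep_class N n r J (P \<rho>)" if r: "\<rho> \<in> reps N n' r' J'" for \<rho>
  proof -
    have "\<rho> \<in> rep_class N n' r' J' \<rho>" unfolding rep_class_def using equiv_class_self[OF eqJ' r] .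
    hence "(SOME \<sigma>. \<sigma> \<in> rep_class N n' r' J' \<rho>) \<in> rep_class N n' r' J' \<rho>" by (rule someI[where P="\<lambda>\<sigma>. \<sigma> \<in> rep_class N n' r' J' \<rho>"])
    hence "(\<rho>, SOME \<sigma>. \<sigma> \<in> rep_class N n' r' J' \<rho>) \<in> rep_rel N n' r' J'" unfolding rep_class_def by simp
    hence "(P \<rho>, P (SOME \<sigma>. \<sigma> \<in> rep_class N n' r' J' \<rho>)) \<in> rep_rel N n r J"
      unfolding P_def by (rule rel_pull[OF pe])
    hence "rep_rel N n r J `` {P \<rho>} = rep_rel N n r J `` {P (SOME \<sigma>. \<sigma> \<in> rep_class N n' r' J' \<rho>)}"
      using equiv_class_eq_iff[OF eqJ] by blast
    thus ?thesis unfolding F_def Gr_pullback_def rep_class_def P_def by simp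
  qed
  have P3: "F \<in> Gr N n' r' J' \<rightarrow> Gr N n r J"
  proof
    fix C assume "C \<in> Gr N n' r' J'"
    then obtain \<rho> where r: "\<rho> \<in> reps N n' r' J'" "C = rep_rel N n' r' J' `` {\<rho>}"
      unfolding Gr_def by (auto elim: quotientE)
    have "F C = rep_class N n r J (P \<rho>)" using P2[OF r(1)] r(2) by (simp add: rep_class_def)
    thus "F C \<in> Gr N n r J" using P1 r(1) unfolding Gr_def rep_class_def by (auto intro: quotientI)
  qed
  have P4: "bij_betw F (Gr N n' r' J') (Gr N n r J)" if bij: "bij_betw \<iota> J J'"
  proof (rule bij_betwI')
    fix C1 C2 assume c1: "C1 \<in> Gr N n' r' J'" and c2: "C2 \<in> Gr N n' r' J'"
    obtain \<rho>1 where r1: "\<rho>1 \<in> reps N n' r' J'" "C1 = rep_rel N n' r' J' `` {\<rho>1}"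
      using c1 unfolding Gr_def by (auto elim: quotientE)
    obtain \<rho>2 where r2: "\<rho>2 \<in> reps N n' r' J'" "C2 = rep_rel N n' r' J' `` {\<rho>2}"
      using c2 unfolding Gr_def by (auto elim: quotientE)
    have F1: "F C1 = rep_class N n r J (P \<rho>1)" using P2[OF r1(1)] r1(2) by (simp add: rep_class_def)
    have F2: "F C2 = rep_class N n r J (P \<rho>2)" using P2[OF r2(1)] r2(2) by (simp add: rep_class_def)
    show "(F C1 = F C2) = (C1 = C2)"
    proof
      assume "F C1 = F C2"
      hence "rep_rel N n r J `` {P \<rho>1} = rep_rel N n r J `` {P \<rho>2}" using F1 F2 by (simp add: rep_class_def)
      hence "(P \<rho>1, P \<rho>2) \<in> rep_rel N n r J" using equiv_class_eq_iff[OF eqJ] P1 r1(1) r2(1) by blast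
      then obtain a where a: "a \<noteq> 0" "P \<rho>2 = (\<lambda>\<beta>. a * P \<rho>1 \<beta>)" unfolding rep_rel_def by blast
      have s1: "{\<beta>. \<rho>1 \<beta> \<noteq> 0} = J'" using r1(1) by (simp add: reps_def is_rep_def)
      have s2: "{\<beta>. \<rho>2 \<beta> \<noteq> 0} = J'" using r2(1) by (simp add: reps_def is_rep_def)
      have "\<rho>2 = (\<lambda>\<beta>. a * \<rho>1 \<beta>)"
      proof
        fix \<beta>
        show "\<rho>2 \<beta> = a * \<rho>1 \<beta>"
        proof (cases "\<beta> \<in> J'")
          case True
          then obtain \<alpha> where al: "\<alpha> \<in> J" "\<beta> = \<iota> \<alpha>" using bij by (auto simp: bij_betw_def)
          have "P \<rho>2 \<alpha> = a * P \<rho>1 \<alpha>" using a(2) by metis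
          thus ?thesis using al by (simp add: P_def pullback_def)
        next
          case False
          hence "\<rho>1 \<beta> = 0" "\<rho>2 \<beta> = 0" using s1 s2 by auto
          thus ?thesis by simp
        qed
      qed
      hence "(\<rho>1, \<rho>2) \<in> rep_rel N n' r' J'" using a(1) r1(1) r2(1) unfolding rep_rel_def by blast
      thus "C1 = C2" using equiv_class_eq_iff[OF eqJ'] r1(2) r2(2) by blast
    qed (simp)
  next
    fix C assume "C \<in> Gr N n' r' J'"
    thus "F C \<in> Gr N n r J" using P3 by blast
  next
    fix D assume "D \<in> Gr N n r J"
    then obtain \<pi> where p: "\<pi> \<in> reps N n r J" "D = rep_rel N n r J `` {\<pi>}"
      unfolding Gr_def by (auto elim: quotientE)
    obtain \<rho> where r: "is_rep N n' r' J' \<rho>" "pullback J \<iota> \<rho> = \<pi>"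
      using poly_surj[OF pe bij] p(1) by (auto simp: reps_def)
    have rr: "\<rho> \<in> reps N n' r' J'" using r(1) by (simp add: reps_def)
    have "F (rep_class N n' r' J' \<rho>) = D" using P2[OF rr] r(2) p(2) by (simp add: P_def rep_class_def)
    moreover have "rep_class N n' r' J' \<rho> \<in> Gr N n' r' J'" using rr unfolding Gr_def rep_class_def by (rule quotientI)
    ultimately show "\<exists>C\<in>Gr N n' r' J'. D = F C" by metis
  qed
  show ?thesis using P1 P2 P3 P4 unfolding F_def P_def by blast
qed


end
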